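(* For every $z\in\mathbb{C}$ with $|z|=1$ and every integer $k\ge2$, $$\mathbb{E}_{X\sim\mathcal{G}}\big[|\mathrm{Per}_z(X)|^{2k}\big]\le\mathbb{E}_{X\sim\mathcal{G}}\big[|\mathrm{Per}(X)|^{2k}\big].$$
   Context: For $z\in\mathbb{C}$ with $|z|=1$ and $X\in\mathbb{C}^{n\times n}$, $\mathrm{Per}_z(X)=\sum_{\sigma\in S_n} z^{\ell(\sigma)}\prod_{i=1}^n X_{i,\sigma(i)}$ with $\ell(\sigma)$ the inversion number; $\mathrm{Per}=\mathrm{Per}_1$. $\mathcal{G}$ denotes the distribution of $n\times n$ matrices with i.i.d. standard complex Gaussian entries $\mathcal{N}_{\mathbb{C}}(0,1)$. *)

theory Defs
  imports "HOL-Probability.Probability" "HOL-Combinatorics.Permutations"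
begin

definition inv_num :: "nat \<Rightarrow> (nat \<Rightarrow> nat) \<Rightarrow> nat" where
  "inv_num n \<sigma> = card {(i, j). i < j \<and> j < n \<and> \<sigma> j < \<sigma> i}"

text \<open>n x n complex matrices are represented as functions on index pairs;
  only entries with indices in {0..<n} matter.\<close>
definition per_z :: "nat \<Rightarrow> complex \<Rightarrow> (nat \<times> nat \<Rightarrow> complex) \<Rightarrow> complex" where
  "per_z n z X = (\<Sum>\<sigma> | \<sigma> permutes {..<n}.
                    z ^ inv_num n \<sigma> * (\<Prod>i<n. X (i, \<sigma> i)))"

definition per :: "nat \<Rightarrow> (nat \<times> nat \<Rightarrow> complex) \<Rightarrow> complex" where
  "per n X = per_z n 1 X"

definition cgauss :: "complex measure" where
  "cgauss = density lborel (\<lambda>w. ennreal (exp (- (cmod w)\<^sup>2) / pi))"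

definition gauss_mat :: "nat \<Rightarrow> (nat \<times> nat \<Rightarrow> complex) measure" where
  "gauss_mat n = PiM ({..<n} \<times> {..<n}) (\<lambda>_. cgauss)"

end

theory Submission
  imports Defs
begin


abbreviation "PP \<equiv> (lborel \<Otimes>\<^sub>M lborel :: (real \<times> real) measure)"

lemma shear_x:
  "distr PP PP (\<lambda>p. (fst p + a * snd p, snd p)) = PP"
proof (rule measure_eqI)
  fix A assume A: "A \<in> sets (distr PP PP (\<lambda>p. (fst p + a * snd p, snd p)))"
  then have A': "A \<in> sets PP" by simp
  have "emeasure (distr PP PP (\<lambda>p. (fst p + a * snd p, snd p))) A
      = (\<integral>\<^sup>+p. indicator A p \<partial>(distr PP PP (\<lambda>p. (fst p + a * snd p, snd p))))"
    using A by (rule nn_integral_indicator[symmetric])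
  also have "\<dots> = (\<integral>\<^sup>+p. indicator A (fst p + a * snd p, snd p) \<partial>PP)"
    using A' by (subst nn_integral_distr) auto
  also have "\<dots> = (\<integral>\<^sup>+y. \<integral>\<^sup>+x. indicator A (x + a * y, y) \<partial>lborel \<partial>lborel)"
    using A' by (subst lborel_pair.nn_integral_snd[symmetric]) auto
  also have "\<dots> = (\<integral>\<^sup>+y. \<integral>\<^sup>+x. indicator A (x, y) \<partial>lborel \<partial>lborel)"
  proof (rule nn_integral_cong)
    fix y :: real
    have [measurable]: "(\<lambda>x. indicator A (x, y) :: ennreal) \<in> borel_measurable borel"
      using A' by measurable
    show "(\<integral>\<^sup>+x. indicator A (x + a * y, y) \<partial>lborel) = (\<integral>\<^sup>+x. indicator A (x, y) \<partial>lborel)"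
      using nn_integral_real_affine[of "\<lambda>x. indicator A (x, y)" 1 "a*y"]
      by (simp add: add.commute)
  qed
  also have "\<dots> = emeasure PP A"
    using A' by (subst lborel_pair.nn_integral_snd) auto
  finally show "emeasure (distr PP PP (\<lambda>p. (fst p + a * snd p, snd p))) A = emeasure PP A" .
qed simp

lemma shear_y:
  "distr PP PP (\<lambda>p. (fst p, snd p + b * fst p)) = PP"
proof (rule measure_eqI)
  fix A assume A: "A \<in> sets (distr PP PP (\<lambda>p. (fst p, snd p + b * fst p)))"
  then have A': "A \<in> sets PP" by simp
  have "emeasure (distr PP PP (\<lambda>p. (fst p, snd p + b * fst p))) A
      = (\<integral>\<^sup>+p. indicator A p \<partial>(distr PP PP (\<lambda>p. (fst p, snd p + b * fst p))))"
    using A by (rule nn_integral_indicator[symmetric])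
  also have "\<dots> = (\<integral>\<^sup>+p. indicator A (fst p, snd p + b * fst p) \<partial>PP)"
    using A' by (subst nn_integral_distr) auto
  also have "\<dots> = (\<integral>\<^sup>+x. \<integral>\<^sup>+y. indicator A (x, y + b * x) \<partial>lborel \<partial>lborel)"
    using A' by (subst lborel.nn_integral_fst[symmetric]) auto
  also have "\<dots> = (\<integral>\<^sup>+x. \<integral>\<^sup>+y. indicator A (x, y) \<partial>lborel \<partial>lborel)"
  proof (rule nn_integral_cong)
    fix x :: real
    have [measurable]: "(\<lambda>y. indicator A (x, y) :: ennreal) \<in> borel_measurable borel"
      using A' by measurable
    show "(\<integral>\<^sup>+y. indicator A (x, y + b * x) \<partial>lborel) = (\<integral>\<^sup>+y. indicator A (x, y) \<partial>lborel)"
      using nn_integral_real_affine[of "\<lambda>y. indicator A (x, y)" 1 "b*x"]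
      by (simp add: add.commute)
  qed
  also have "\<dots> = emeasure PP A"
    using A' by (subst lborel.nn_integral_fst) auto
  finally show "emeasure (distr PP PP (\<lambda>p. (fst p, snd p + b * fst p))) A = emeasure PP A" .
qed simp




lemma cx_meas[measurable]: "(\<lambda>p. Complex (fst p) (snd p)) \<in> borel_measurable PP"
  by (simp add: borel_measurable_complex_iff)

lemma bridge: "distr PP borel (\<lambda>p. Complex (fst p) (snd p)) = (lborel :: complex measure)"
proof (rule lborel_eqI[symmetric])
  fix l u :: complex
  assume le: "\<And>b. b \<in> Basis \<Longrightarrow> l \<bullet> b \<le> u \<bullet> b"
  then have le1: "Re l \<le> Re u" and le2: "Im l \<le> Im u"
    using le[of 1] le[of \<i>] by (auto simp: Basis_complex_def inner_complex_def)
  have pre: "(\<lambda>p. Complex (fst p) (snd p)) -` box l u \<inter> space PP = {Re l<..<Re u} \<times> {Im l<..<Im u}"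
    by (auto simp: box_def Basis_complex_def inner_complex_def space_pair_measure)
  have "emeasure (distr PP borel (\<lambda>p. Complex (fst p) (snd p))) (box l u)
     = emeasure PP ({Re l<..<Re u} \<times> {Im l<..<Im u})"
    by (subst emeasure_distr) (simp_all add: pre)
  also have "\<dots> = ennreal (Re u - Re l) * ennreal (Im u - Im l)"
    using le1 le2 by (simp add: lborel.emeasure_pair_measure_Times)
  also have "\<dots> = (\<Prod>b\<in>Basis. (u - l) \<bullet> b)"
    using le1 le2 by (simp add: Basis_complex_def inner_complex_def ennreal_mult)
  finally show "emeasure (distr PP borel (\<lambda>p. Complex (fst p) (snd p))) (box l u) = (\<Prod>b\<in>Basis. (u - l) \<bullet> b)" .
qed simp

lemma rot_lborel:
  fixes u :: complex
  assumes "cmod u = 1" "u \<noteq> -1"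
  shows "distr lborel borel (\<lambda>w. u * w) = (lborel :: complex measure)"
proof -
  define c where "c = Re u"
  define s where "s = Im u"
  have cs: "c^2 + s^2 = 1" using assms(1) unfolding c_def s_def cmod_def by simp
  have c1: "1 + c \<noteq> 0"
  proof
    assume "1 + c = 0" then have "c = -1" by simp
    with cs have "s = 0" by simp
    with \<open>c = -1\<close> have "u = -1" unfolding c_def s_def by (simp add: complex_eq_iff)
    with assms(2) show False by simp
  qed
  define a where "a = - s / (1 + c)"
  have ab: "1 + a * s = c" using cs c1 unfolding a_def
    by (simp add: field_simps power2_eq_square)
  have ab2: "a * (2 + a * s) = - s"
  proof -
    have "2 + a * s = 1 + c" using ab by simp
    then have "a * (2 + a * s) = a * (1 + c)" by simp
    also have "\<dots> = - s" using c1 unfolding a_def by simp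
    finally show ?thesis .
  qed
  define Sx where "Sx = (\<lambda>p::real\<times>real. (fst p + a * snd p, snd p))"
  define Sy where "Sy = (\<lambda>p::real\<times>real. (fst p, snd p + s * fst p))"
  define cx where "cx = (\<lambda>p::real\<times>real. Complex (fst p) (snd p))"
  have [measurable]: "Sx \<in> measurable PP PP" "Sy \<in> measurable PP PP" "cx \<in> borel_measurable PP"
    unfolding Sx_def Sy_def cx_def by (simp_all add: borel_measurable_complex_iff)
  have eq: "(\<lambda>p. u * cx p) = (\<lambda>p. cx (Sx (Sy (Sx p))))"
  proof
    fix p :: "real \<times> real"
    obtain x y where p: "p = (x, y)" by (cases p)
    have "u = Complex c s" unfolding c_def s_def by simp
    then show "u * cx p = cx (Sx (Sy (Sx p)))"
    proof -
      have ac0: "a * (1 + c) = - s" using c1 unfolding a_def by simp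
      have ac: "a + a * c = - s" using ac0 by (simp add: algebra_simps)
      have e1: "x + a * y + a * (s * x + c * y) = (1 + a * s) * x + (a + a * c) * y"
        by (simp add: algebra_simps)
      have e2: "y + s * (x + a * y) = s * x + (1 + a * s) * y"
        by (simp add: algebra_simps)
      show ?thesis using \<open>u = Complex c s\<close> unfolding p cx_def Sx_def Sy_def
        by (simp add: complex_eq_iff e2 ab e1 ac)
    qed
  qed
  have "distr lborel borel (\<lambda>w. u * w) = distr (distr PP borel cx) borel (\<lambda>w. u * w)"
    by (simp add: bridge cx_def)
  also have "\<dots> = distr PP borel (\<lambda>p. u * cx p)"
    by (subst distr_distr) (auto simp: o_def)
  also have "\<dots> = distr PP borel (\<lambda>p. cx (Sx (Sy (Sx p))))" by (simp add: eq)
  also have "\<dots> = distr (distr (distr (distr PP PP Sx) PP Sy) PP Sx) borel cx"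
    by (simp add: distr_distr o_def)
  also have "\<dots> = distr PP borel cx"
    unfolding Sx_def Sy_def shear_x shear_y shear_x ..
  also have "\<dots> = lborel" by (simp add: bridge cx_def)
  finally show ?thesis .
qed




lemma pow_sum_le: fixes a b :: real assumes "0 \<le> a" "0 \<le> b"
  shows "(a + b)^m \<le> 2^m * (a^m + b^m)"
proof -
  have "a + b \<le> 2 * max a b" by simp
  then have "(a+b)^m \<le> (2 * max a b)^m" by (rule power_mono) (use assms in auto)
  also have "\<dots> = 2^m * (max a b)^m" by (simp add: power_mult_distrib)
  also have "(max a b)^m \<le> a^m + b^m" using assms
    by (cases "a \<le> b") (auto simp: max_def)
  finally show ?thesis by simp
qed

lemma pow_le_one_plus: fixes t :: real assumes "0 \<le> t" shows "t^m \<le> 1 + t^(2*m)"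
proof (cases "t \<le> 1")
  case True then have "t^m \<le> 1" using assms by (simp add: power_le_one)
  then show ?thesis using assms by (smt (verit) zero_le_power)
next
  case False then have "t^m \<le> t^(2*m)" by (intro power_increasing) auto
  then show ?thesis by simp
qed

lemma prod_integrable:
  fixes F G :: "real \<Rightarrow> real"
  assumes F: "integrable lborel F" and G: "integrable lborel G"
  shows "integrable PP (\<lambda>p. F (fst p) * G (snd p))"
proof (rule lborel_pair.Fubini_integrable)
  show "(\<lambda>p. F (fst p) * G (snd p)) \<in> borel_measurable PP"
    using F G by (auto dest: borel_measurable_integrable)
  have "(\<lambda>x. \<integral>y. norm (F (fst (x, y)) * G (snd (x, y))) \<partial>lborel) = (\<lambda>x. norm (F x) * (\<integral>y. norm (G y) \<partial>lborel))"
    by (simp add: norm_mult abs_mult)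
  then show "integrable lborel (\<lambda>x. \<integral>y. norm (F (fst (x, y)) * G (snd (x, y))) \<partial>lborel)"
    using F by (simp add: integrable_norm)
  show "AE x in lborel. integrable lborel (\<lambda>y. F (fst (x, y)) * G (snd (x, y)))"
    using G by simp
qed

definition gdens :: "complex \<Rightarrow> real" where "gdens w = exp (- (cmod w)\<^sup>2) / pi"

lemma gdens_meas[measurable]: "gdens \<in> borel_measurable borel"
  unfolding gdens_def by measurable

lemma gdens_nonneg: "0 \<le> gdens w" unfolding gdens_def by simp

lemma cgauss_eq: "cgauss = density lborel (\<lambda>w. ennreal (gdens w))"
  unfolding cgauss_def gdens_def ..

lemma sets_cgauss[simp, measurable_cong]: "sets cgauss = sets borel"
  by (simp add: cgauss_def)

lemma space_cgauss[simp]: "space cgauss = UNIV"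
  by (simp add: cgauss_def)

lemma F_int: "integrable lborel (\<lambda>x::real. exp (- x\<^sup>2 / 2) * (1 + 2^m * x^(2*m)))"
proof -
  have i1: "integrable lborel (\<lambda>x. std_normal_density x * x^0 + 2^m * (std_normal_density x * x^(2*m)))"
    using integrable_std_normal_moment[of 0] integrable_std_normal_moment[of "2*m"] by auto
  have i2: "integrable lborel (\<lambda>x. sqrt (2*pi) * (std_normal_density x * x^0 + 2^m * (std_normal_density x * x^(2*m))))"
    by (rule integrable_mult_right[OF i1])
  have eq: "(\<lambda>x. sqrt (2*pi) * (std_normal_density x * x^0 + 2^m * (std_normal_density x * x^(2*m))))
      = (\<lambda>x::real. exp (- x\<^sup>2 / 2) * (1 + 2^m * x^(2*m)))"
    by (auto simp: std_normal_density_def normal_density_def field_simps real_sqrt_mult)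
  show ?thesis using i2 unfolding eq .
qed

lemma cmod_moment_integrable: "integrable cgauss (\<lambda>w. cmod w ^ m)"
proof -
  let ?cx = "\<lambda>p::real\<times>real. Complex (fst p) (snd p)"
  let ?F = "\<lambda>x::real. exp (- x\<^sup>2 / 2) * (1 + 2^m * x^(2*m))"
  have "integrable PP (\<lambda>p. gdens (?cx p) * cmod (?cx p) ^ m)"
  proof (rule Bochner_Integration.integrable_bound)
    show "integrable PP (\<lambda>p. ?F (fst p) * ?F (snd p))"
      by (rule prod_integrable) (rule F_int)+
    show "(\<lambda>p. gdens (?cx p) * cmod (?cx p) ^ m) \<in> borel_measurable PP" by measurable
    show "AE p in PP. norm (gdens (?cx p) * cmod (?cx p) ^ m) \<le> norm (?F (fst p) * ?F (snd p))"
    proof (rule AE_I2)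
      fix p :: "real \<times> real"
      obtain x y where p: "p = (x,y)" by (cases p)
      have c2: "(cmod (Complex x y))\<^sup>2 = x\<^sup>2 + y\<^sup>2" by (simp add: cmod_def)
      have "cmod (Complex x y) ^ m \<le> 1 + cmod (Complex x y) ^ (2*m)" by (rule pow_le_one_plus) simp
      also have "cmod (Complex x y) ^ (2*m) = (x\<^sup>2 + y\<^sup>2) ^ m" by (simp add: power_mult c2)
      also have "\<dots> \<le> 2^m * ((x\<^sup>2)^m + (y\<^sup>2)^m)" by (rule pow_sum_le) auto
      also have "1 + 2^m * ((x\<^sup>2)^m + (y\<^sup>2)^m) \<le> (1 + 2^m * x^(2*m)) * (1 + 2^m * y^(2*m))"
      proof -
        have "0 \<le> x^(2*m) * y^(2*m)" by (simp add: power_mult)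
        then show ?thesis by (simp add: power_mult[symmetric] algebra_simps mult.commute[of 2 m])
      qed
      finally have A: "cmod (Complex x y) ^ m \<le> (1 + 2^m * x^(2*m)) * (1 + 2^m * y^(2*m))" by simp
      have "gdens (Complex x y) = exp (- x\<^sup>2 - y\<^sup>2) / pi" unfolding gdens_def c2 by simp
      also have "\<dots> \<le> exp (- x\<^sup>2 - y\<^sup>2)" using pi_gt3 by (simp add: divide_le_eq)
      also have "\<dots> \<le> exp (- x\<^sup>2 / 2) * exp (- y\<^sup>2 / 2)" proof -
        have "- x\<^sup>2 - y\<^sup>2 \<le> - (x\<^sup>2 / 2) - y\<^sup>2 / 2" by (simp add: field_simps)
        then show ?thesis by (simp add: exp_add[symmetric])
      qed
      finally have B: "gdens (Complex x y) \<le> exp (- x\<^sup>2 / 2) * exp (- y\<^sup>2 / 2)" .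
      have "gdens (Complex x y) * cmod (Complex x y) ^ m \<le> (exp (- x\<^sup>2 / 2) * exp (- y\<^sup>2 / 2)) * ((1 + 2^m * x^(2*m)) * (1 + 2^m * y^(2*m)))"
        by (rule mult_mono[OF B A]) (auto simp: gdens_nonneg)
      then show "norm (gdens (?cx p) * cmod (?cx p) ^ m) \<le> norm (?F (fst p) * ?F (snd p))"
        unfolding p using gdens_nonneg[of "Complex x y"] by (simp add: algebra_simps)
    qed
  qed
  then have "integrable (distr PP borel ?cx) (\<lambda>w. gdens w * cmod w ^ m)"
    by (subst integrable_distr_eq) auto
  then have "integrable lborel (\<lambda>w. gdens w *\<^sub>R cmod w ^ m)"
    by (simp add: bridge)
  then show ?thesis
    unfolding cgauss_eq by (subst integrable_density) (auto simp: gdens_nonneg)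
qed




lemma cnj_meas[measurable]: "cnj \<in> borel_measurable borel"
  by (simp add: borel_measurable_complex_iff)

lemma cgauss_finite: "finite_measure cgauss"
proof -
  have "integrable cgauss (\<lambda>w. 1::real)" using cmod_moment_integrable[of 0] by simp
  then have "(\<integral>\<^sup>+x. ennreal (1::real) \<partial>cgauss) \<noteq> \<infinity>" by (rule integrableD(2))
  then have "emeasure cgauss (space cgauss) < \<infinity>"
    by (simp add: nn_integral_const top.not_eq_extremum)
  then show ?thesis by (rule finite_measureI[OF less_imp_neq])
qed

lemma cmono_integrable: "integrable cgauss (\<lambda>w. w^a * cnj w ^ b)"
proof (rule Bochner_Integration.integrable_bound)
  show "integrable cgauss (\<lambda>w. cmod w ^ (a+b))" by (rule cmod_moment_integrable)
  show "(\<lambda>w. w^a * cnj w ^ b) \<in> borel_measurable cgauss" by measurable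
  show "AE x in cgauss. norm (x ^ a * cnj x ^ b) \<le> norm (cmod x ^ (a + b))"
    by (simp add: norm_mult norm_power power_add)
qed

lemma cgauss_rot:
  fixes f :: "complex \<Rightarrow> complex" and u :: complex
  assumes u: "cmod u = 1" "u \<noteq> -1" and f[measurable]: "f \<in> borel_measurable borel"
  shows "(\<integral>w. f (u * w) \<partial>cgauss) = (\<integral>w. f w \<partial>cgauss)"
proof -
  have "(\<integral>w. f (u * w) \<partial>cgauss) = (\<integral>w. gdens w *\<^sub>R f (u * w) \<partial>lborel)"
    unfolding cgauss_eq by (subst integral_density) (auto simp: gdens_nonneg)
  also have "\<dots> = (\<integral>w. gdens (u * w) *\<^sub>R f (u * w) \<partial>lborel)"
    by (simp add: gdens_def norm_mult u)
  also have "\<dots> = (\<integral>v. gdens v *\<^sub>R f v \<partial>(distr lborel borel (\<lambda>w. u * w)))"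
    by (subst integral_distr) auto
  also have "\<dots> = (\<integral>v. gdens v *\<^sub>R f v \<partial>lborel)" by (simp add: rot_lborel[OF u])
  also have "\<dots> = (\<integral>w. f w \<partial>cgauss)"
    unfolding cgauss_eq by (subst integral_density) (auto simp: gdens_nonneg)
  finally show ?thesis .
qed

lemma cis_pow_aux: "cis t ^ a * cis (-t) ^ b = cis (real a * t) * cis (real b * - t)"
  by (metis Complex.DeMoivre)

lemma moment_zero:
  assumes "a \<noteq> b"
  shows "(\<integral>w. w^a * cnj w ^ b \<partial>cgauss) = 0"
proof -
  define d where "d = real a - real b"
  have d0: "d \<noteq> 0" using assms unfolding d_def by simp
  define \<theta> where "\<theta> = pi / (2 * \<bar>d\<bar>)"
  have dd: "1 \<le> \<bar>d\<bar>"
  proof (cases "a < b")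
    case True then have "real a + 1 \<le> real b" by linarith
    then show ?thesis unfolding d_def by simp
  next
    case False then have "real b + 1 \<le> real a" using assms by linarith
    then show ?thesis unfolding d_def by simp
  qed
  have th: "0 < \<theta>" "\<theta> \<le> pi / 2" using d0 unfolding \<theta>_def
  proof -
    show "0 < pi / (2 * \<bar>d\<bar>)" using d0 by simp
    have "pi / (2 * \<bar>d\<bar>) \<le> pi / (2 * 1)"
      by (rule divide_left_mono) (use dd in auto)
    then show "pi / (2 * \<bar>d\<bar>) \<le> pi / 2" by simp
  qed
  define u where "u = cis \<theta>"
  have u1: "cmod u = 1" unfolding u_def by simp
  have un: "u \<noteq> -1"
  proof
    assume "u = -1"
    then have "Re u = -1" by simp
    moreover have "cos \<theta> \<ge> 0" using th by (intro cos_ge_zero) auto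
    ultimately show False unfolding u_def by simp
  qed
  define c where "c = u^a * cnj u ^ b"
  have c: "c = cis (d * \<theta>)"
  proof -
    have "c = cis (real a * \<theta>) * cis (real b * (-\<theta>))"
      unfolding c_def u_def cis_cnj by (rule cis_pow_aux)
    also have "\<dots> = cis (real a * \<theta> + real b * (-\<theta>))" by (simp add: cis_mult)
    also have "real a * \<theta> + real b * (-\<theta>) = d * \<theta>" unfolding d_def by (simp add: algebra_simps)
    finally show ?thesis .
  qed
  have dth: "d * \<theta> = pi/2 \<or> d * \<theta> = - (pi/2)"
  proof (cases "d > 0")
    case True then show ?thesis unfolding \<theta>_def by simp
  next
    case False then have "d < 0" using d0 by simp
    then show ?thesis unfolding \<theta>_def by simp
  qed
  then have "c = cis (pi/2) \<or> c = cis (-(pi/2))" using c by metis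
  then have c1: "c \<noteq> 1" by (auto simp: complex_eq_iff)
  let ?I = "(\<integral>w. w^a * cnj w ^ b \<partial>cgauss)"
  have "?I = (\<integral>w. (u*w)^a * cnj (u*w) ^ b \<partial>cgauss)"
    by (rule cgauss_rot[OF u1 un, symmetric]) measurable
  also have "\<dots> = (\<integral>w. c * (w^a * cnj w ^ b) \<partial>cgauss)"
    unfolding c_def by (simp add: power_mult_distrib algebra_simps)
  also have "\<dots> = c * ?I" by simp
  finally have "(1 - c) * ?I = 0" by (simp add: algebra_simps)
  with c1 show ?thesis by simp
qed

lemma moment_diag:
  "(\<integral>w. w^a * cnj w ^ a \<partial>cgauss) = complex_of_real (\<integral>w. cmod w ^ (2*a) \<partial>cgauss)"
  "0 \<le> (\<integral>w. cmod w ^ (2*a) \<partial>cgauss)"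
proof -
  have "\<And>w. w^a * cnj w ^ a = complex_of_real (cmod w ^ (2*a))"
  proof -
    fix w :: complex
    have "w^a * cnj w ^ a = (w * cnj w)^a" by (simp add: power_mult_distrib)
    also have "\<dots> = complex_of_real (((cmod w)^2) ^ a)" by (simp only: complex_norm_square[symmetric] of_real_power)
    finally show "w^a * cnj w ^ a = complex_of_real (cmod w ^ (2*a))" by (simp add: power_mult)
  qed
  then show "(\<integral>w. w^a * cnj w ^ a \<partial>cgauss) = complex_of_real (\<integral>w. cmod w ^ (2*a) \<partial>cgauss)"
    by (simp only: integral_complex_of_real[symmetric])
  show "0 \<le> (\<integral>w. cmod w ^ (2*a) \<partial>cgauss)" by simp
qed




interpretation cg: finite_measure cgauss by (rule cgauss_finite)

interpretation PS: product_sigma_finite "\<lambda>_::nat\<times>nat. cgauss"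
  by unfold_locales

definition monoX :: "nat \<Rightarrow> (nat\<times>nat \<Rightarrow> nat) \<Rightarrow> (nat\<times>nat \<Rightarrow> nat) \<Rightarrow> (nat\<times>nat \<Rightarrow> complex) \<Rightarrow> complex" where
  "monoX n A B X = (\<Prod>e\<in>{..<n}\<times>{..<n}. X e ^ A e * cnj (X e) ^ B e)"

lemma mono_integrable: "integrable (gauss_mat n) (monoX n A B)"
  unfolding monoX_def gauss_mat_def
  by (rule PS.product_integrable_prod) (auto intro: cmono_integrable)

lemma mono_integral:
  "\<exists>r\<ge>0. (\<integral>X. monoX n A B X \<partial>gauss_mat n) = complex_of_real r"
proof -
  have eq: "(\<integral>X. monoX n A B X \<partial>gauss_mat n) =
     (\<Prod>e\<in>{..<n}\<times>{..<n}. \<integral>w. w ^ A e * cnj w ^ B e \<partial>cgauss)"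
    unfolding monoX_def gauss_mat_def
    by (rule PS.product_integral_prod) (auto intro: cmono_integrable)
  have "\<forall>e. \<exists>r\<ge>0. (\<integral>w. w ^ A e * cnj w ^ B e \<partial>cgauss) = complex_of_real r"
  proof
    fix e show "\<exists>r\<ge>0. (\<integral>w. w ^ A e * cnj w ^ B e \<partial>cgauss) = complex_of_real r"
    proof (cases "A e = B e")
      case True then show ?thesis using moment_diag[of "B e"] by auto
    next
      case False then show ?thesis using moment_zero[OF False] by (intro exI[of _ 0]) auto
    qed
  qed
  then obtain r where r: "\<And>e. r e \<ge> 0" "\<And>e. (\<integral>w. w ^ A e * cnj w ^ B e \<partial>cgauss) = complex_of_real (r e)"
    by metis
  show ?thesis unfolding eq r(2)
    by (intro exI[of _ "\<Prod>e\<in>{..<n}\<times>{..<n}. r e"]) (auto simp: r(1) prod_nonneg)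
qed




definition "Sp n = {\<sigma>. \<sigma> permutes {..<n::nat}}"
definition "Mp n \<sigma> X = (\<Prod>i<n. X (i, \<sigma> i) :: complex)"
definition "Kp n k = PiE {..<k::nat} (\<lambda>_. Sp n)"
definition "cnt n k s e = card {x \<in> {..<k}\<times>{..<n}. (snd x, s (fst x) (snd x)) = e}"
definition "coef n k z s t = (\<Prod>j<k. z ^ inv_num n (s j) * cnj z ^ inv_num n (t j))"

lemma finite_Sp: "finite (Sp n)" unfolding Sp_def by (rule finite_permutations) simp
lemma finite_Kp: "finite (Kp n k)" unfolding Kp_def by (simp add: finite_PiE finite_Sp)

lemma grp:
  fixes f :: "'b \<Rightarrow> 'c::comm_monoid_mult"
  assumes "finite D" "finite T" "g ` D \<subseteq> T"
  shows "(\<Prod>x\<in>D. f (g x)) = (\<Prod>e\<in>T. f e ^ card {x\<in>D. g x = e})"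
proof -
  have "(\<Prod>x\<in>D. f (g x)) = (\<Prod>e\<in>T. \<Prod>x\<in>{x. x\<in>D \<and> g x = e}. f (g x))"
    by (rule prod.group[symmetric]) (use assms in auto)
  also have "\<dots> = (\<Prod>e\<in>T. f e ^ card {x\<in>D. g x = e})"
  proof (rule prod.cong)
    fix e assume "e \<in> T"
    have "(\<Prod>x\<in>{x. x\<in>D \<and> g x = e}. f (g x)) = (\<Prod>x\<in>{x. x\<in>D \<and> g x = e}. f e)"
      by (rule prod.cong) auto
    then show "(\<Prod>x\<in>{x. x\<in>D \<and> g x = e}. f (g x)) = f e ^ card {x\<in>D. g x = e}" by simp
  qed simp
  finally show ?thesis .
qed

lemma M_prod:
  assumes s: "s \<in> Kp n k"
  shows "(\<Prod>j<k. Mp n (s j) X) = (\<Prod>e\<in>{..<n}\<times>{..<n}. X e ^ cnt n k s e)"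
proof -
  have "(\<Prod>j<k. Mp n (s j) X) = (\<Prod>x\<in>{..<k}\<times>{..<n}. X (snd x, s (fst x) (snd x)))"
    unfolding Mp_def by (subst prod.cartesian_product) (simp add: case_prod_beta)
  also have "\<dots> = (\<Prod>e\<in>{..<n}\<times>{..<n}. X e ^ cnt n k s e)"
    unfolding cnt_def
  proof (rule grp)
    show "(\<lambda>x. (snd x, s (fst x) (snd x))) ` ({..<k} \<times> {..<n}) \<subseteq> {..<n} \<times> {..<n}"
    proof clarsimp
      fix j i assume "j < k" "i < n"
      then have "s j permutes {..<n}" using s unfolding Kp_def Sp_def by auto
      then show "s j i < n" using \<open>i < n\<close> by (metis lessThan_iff permutes_in_image)
    qed
  qed auto
  finally show ?thesis .
qed

lemma term_mono:
  assumes "s \<in> Kp n k" "t \<in> Kp n k"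
  shows "(\<Prod>j<k. Mp n (s j) X * cnj (Mp n (t j) X)) = monoX n (cnt n k s) (cnt n k t) X"
proof -
  have "(\<Prod>j<k. Mp n (s j) X * cnj (Mp n (t j) X)) = (\<Prod>j<k. Mp n (s j) X) * cnj (\<Prod>j<k. Mp n (t j) X)"
    by (simp add: prod.distrib cnj_prod)
  also have "\<dots> = (\<Prod>e\<in>{..<n}\<times>{..<n}. X e ^ cnt n k s e) * cnj (\<Prod>e\<in>{..<n}\<times>{..<n}. X e ^ cnt n k t e)"
    using assms by (simp add: M_prod)
  also have "\<dots> = monoX n (cnt n k s) (cnt n k t) X"
    unfolding monoX_def by (simp add: prod.distrib cnj_prod)
  finally show ?thesis .
qed

lemma expand:
  "complex_of_real (cmod (per_z n z X) ^ (2*k)) =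
    (\<Sum>s\<in>Kp n k. \<Sum>t\<in>Kp n k. coef n k z s t * (\<Prod>j<k. Mp n (s j) X * cnj (Mp n (t j) X)))"
proof -
  define f where "f = (\<lambda>\<sigma>. z ^ inv_num n \<sigma> * Mp n \<sigma> X)"
  have p: "per_z n z X = (\<Sum>\<sigma>\<in>Sp n. f \<sigma>)"
    unfolding per_z_def f_def Sp_def Mp_def by simp
  have "complex_of_real (cmod (per_z n z X) ^ (2*k)) = (per_z n z X * cnj (per_z n z X)) ^ k"
  proof -
    have "complex_of_real (cmod (per_z n z X) ^ (2*k)) = (complex_of_real (cmod (per_z n z X) ^ 2)) ^ k"
      by (simp add: power_mult)
    then show ?thesis by (simp only: complex_norm_square)
  qed
  also have "\<dots> = (\<Prod>j<k. \<Sum>\<sigma>\<in>Sp n. f \<sigma>) * (\<Prod>j<k. \<Sum>\<sigma>\<in>Sp n. cnj (f \<sigma>))"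
    by (simp add: p power_mult_distrib cnj_sum)
  also have "\<dots> = (\<Sum>s\<in>Kp n k. \<Prod>j<k. f (s j)) * (\<Sum>t\<in>Kp n k. \<Prod>j<k. cnj (f (t j)))"
    unfolding Kp_def
    using prod_sum_PiE[of "{..<k}" "\<lambda>_. Sp n" "\<lambda>j \<sigma>. f \<sigma>"]
      prod_sum_PiE[of "{..<k}" "\<lambda>_. Sp n" "\<lambda>j \<sigma>. cnj (f \<sigma>)"]
    by (simp add: finite_Sp)
  also have "\<dots> = (\<Sum>s\<in>Kp n k. \<Sum>t\<in>Kp n k. (\<Prod>j<k. f (s j)) * (\<Prod>j<k. cnj (f (t j))))"
    by (rule sum_product)
  also have "\<dots> = (\<Sum>s\<in>Kp n k. \<Sum>t\<in>Kp n k. coef n k z s t * (\<Prod>j<k. Mp n (s j) X * cnj (Mp n (t j) X)))"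
    unfolding coef_def f_def
    by (intro sum.cong refl) (simp add: prod.distrib[symmetric] mult_ac)
  finally show ?thesis .
qed




definition "Jst n k s t = (\<integral>X. monoX n (cnt n k s) (cnt n k t) X \<partial>gauss_mat n)"

lemma Jst_real: "Jst n k s t = complex_of_real (Re (Jst n k s t))" "0 \<le> Re (Jst n k s t)"
  using mono_integral[of n "cnt n k s" "cnt n k t"] unfolding Jst_def by auto

lemma expand2:
  "complex_of_real (cmod (per_z n z X) ^ (2*k)) =
    (\<Sum>s\<in>Kp n k. \<Sum>t\<in>Kp n k. coef n k z s t * monoX n (cnt n k s) (cnt n k t) X)"
  unfolding expand by (intro sum.cong refl) (simp add: term_mono)

lemma Lz:
  "complex_of_real (\<integral>X. cmod (per_z n z X) ^ (2*k) \<partial>gauss_mat n) =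
     (\<Sum>s\<in>Kp n k. \<Sum>t\<in>Kp n k. coef n k z s t * complex_of_real (Re (Jst n k s t)))"
proof -
  have "complex_of_real (\<integral>X. cmod (per_z n z X) ^ (2*k) \<partial>gauss_mat n)
      = (\<integral>X. complex_of_real (cmod (per_z n z X) ^ (2*k)) \<partial>gauss_mat n)"
    by (rule integral_complex_of_real[symmetric])
  also have "\<dots> = (\<integral>X. (\<Sum>s\<in>Kp n k. \<Sum>t\<in>Kp n k. coef n k z s t * monoX n (cnt n k s) (cnt n k t) X) \<partial>gauss_mat n)"
    by (rule Bochner_Integration.integral_cong[OF refl]) (rule expand2)
  also have "\<dots> = (\<Sum>s\<in>Kp n k. \<Sum>t\<in>Kp n k. coef n k z s t * Jst n k s t)"
    unfolding Jst_def
    by (simp add: Bochner_Integration.integral_sum Bochner_Integration.integrable_sum mono_integrable)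
  also have "\<dots> = (\<Sum>s\<in>Kp n k. \<Sum>t\<in>Kp n k. coef n k z s t * complex_of_real (Re (Jst n k s t)))"
    by (intro sum.cong refl arg_cong2[where f="(*)"] Jst_real(1))
  finally show ?thesis .
qed

lemma coef_norm: "cmod z = 1 \<Longrightarrow> cmod (coef n k z s t) = 1"
  unfolding coef_def by (simp add: prod_norm[symmetric] norm_mult norm_power)

lemma coef_one: "coef n k 1 s t = 1"
  unfolding coef_def by simp

theorem mainTheorem17:
  fixes n k :: nat and z :: complex
  assumes "cmod z = 1" and "k \<ge> 2"
  shows "(\<integral>X. (cmod (per_z n z X)) ^ (2 * k) \<partial>gauss_mat n)
           \<le> (\<integral>X. (cmod (per n X)) ^ (2 * k) \<partial>gauss_mat n)"
proof -
  let ?R = "\<lambda>s t. Re (Jst n k s t)"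
  have r1: "complex_of_real (\<integral>X. (cmod (per n X)) ^ (2 * k) \<partial>gauss_mat n)
      = complex_of_real (\<Sum>s\<in>Kp n k. \<Sum>t\<in>Kp n k. ?R s t)"
    unfolding per_def Lz coef_one by simp
  have "(\<integral>X. (cmod (per_z n z X)) ^ (2 * k) \<partial>gauss_mat n)
      \<le> cmod (complex_of_real (\<integral>X. (cmod (per_z n z X)) ^ (2 * k) \<partial>gauss_mat n))"
    by simp
  also have "\<dots> = cmod (\<Sum>s\<in>Kp n k. \<Sum>t\<in>Kp n k. coef n k z s t * complex_of_real (?R s t))"
    unfolding Lz ..
  also have "\<dots> \<le> (\<Sum>s\<in>Kp n k. cmod (\<Sum>t\<in>Kp n k. coef n k z s t * complex_of_real (?R s t)))"
    by (rule norm_sum)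
  also have "\<dots> \<le> (\<Sum>s\<in>Kp n k. \<Sum>t\<in>Kp n k. cmod (coef n k z s t * complex_of_real (?R s t)))"
    by (intro sum_mono norm_sum)
  also have "\<dots> = (\<Sum>s\<in>Kp n k. \<Sum>t\<in>Kp n k. ?R s t)"
    by (intro sum.cong refl) (simp add: norm_mult coef_norm[OF assms(1)] abs_of_nonneg[OF Jst_real(2)])
  also have "\<dots> = (\<integral>X. (cmod (per n X)) ^ (2 * k) \<partial>gauss_mat n)"
    using r1 by (metis of_real_eq_iff)
  finally show ?thesis .
qed


end
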